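(* Let $E$ be a real Hilbert space and define the relation $\preceq$ on $E$ by $x\preceq y\iff (x,x)\le (x,y)$. Then $(E,\preceq)$ is a cc sponge with a least element.
   Context: An orientation is a reflexive, antisymmetric binary relation. For $P\subseteq E$, $P$ is right-bounded if some $s$ has $p\preceq s$ for all $p\in P$; the join of $P$ is an $x$ with $p\preceq x$ for all $p\in P$ and $x\preceq y$ whenever $p\preceq y$ for all $p\in P$. An oriented set is a cc sponge if every nonempty right-bounded subset has a join. A least element is an element $z$ with $z\preceq x$ for all $x\in E$. *)

theory Defs
  imports "HOL-Analysis.Analysis"
begin

text \<open>Order-theoretic notions for a binary relation r on the whole type (the set E is UNIV).\<close>

definition orientation :: "('a \<Rightarrow> 'a \<Rightarrow> bool) \<Rightarrow> bool" where
  "orientation r \<longleftrightarrow> (\<forall>x. r x x) \<and> (\<forall>x y. r x y \<and> r y x \<longrightarrow> x = y)"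

definition right_bounded :: "('a \<Rightarrow> 'a \<Rightarrow> bool) \<Rightarrow> 'a set \<Rightarrow> bool" where
  "right_bounded r P \<longleftrightarrow> (\<exists>s. \<forall>p\<in>P. r p s)"

definition is_join :: "('a \<Rightarrow> 'a \<Rightarrow> bool) \<Rightarrow> 'a set \<Rightarrow> 'a \<Rightarrow> bool" where
  "is_join r P x \<longleftrightarrow> (\<forall>p\<in>P. r p x) \<and> (\<forall>y. (\<forall>p\<in>P. r p y) \<longrightarrow> r x y)"

definition cc_sponge :: "('a \<Rightarrow> 'a \<Rightarrow> bool) \<Rightarrow> bool" where
  "cc_sponge r \<longleftrightarrow> orientation r \<and>
     (\<forall>P. P \<noteq> {} \<and> right_bounded r P \<longrightarrow> (\<exists>x. is_join r P x))"

definition least_element :: "('a \<Rightarrow> 'a \<Rightarrow> bool) \<Rightarrow> 'a \<Rightarrow> bool" where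
  "least_element r z \<longleftrightarrow> (\<forall>x. r z x)"

definition hrel :: "'a::real_inner \<Rightarrow> 'a \<Rightarrow> bool" where
  "hrel x y \<longleftrightarrow> inner x x \<le> inner x y"

end

theory Submission
  imports Defs
begin

lemma parallelogram_ineq:
  fixes a b :: "'a::real_inner"
  shows "(norm (a - b))^2 = 2 * (norm a)^2 + 2 * (norm b)^2 - (norm (a + b))^2"
  by (simp add: power2_norm_eq_inner inner_diff_left inner_diff_right inner_add_left inner_add_right inner_commute)

lemma min_norm_exists:
  fixes S :: "'a::{real_inner,complete_space} set"
  assumes cl: "closed S" and cv: "convex S" and ne: "S \<noteq> {}"
  shows "\<exists>x\<in>S. \<forall>y\<in>S. norm x \<le> norm y"
proof -
  define d where "d = Inf (norm ` S)"
  have bdd: "bdd_below (norm ` S)" by (rule bdd_belowI[of _ 0]) auto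
  have dle: "d \<le> norm y" if "y \<in> S" for y
    unfolding d_def using bdd that by (simp add: cInf_lower)
  have d0: "0 \<le> d" unfolding d_def using ne by (auto intro: cInf_greatest)
  have "\<exists>y\<in>S. norm y < d + inverse (real (Suc n))" for n
  proof -
    have "Inf (norm ` S) < d + inverse (real (Suc n))" unfolding d_def by simp
    from cInf_lessD[OF _ this] ne show ?thesis by auto
  qed
  then obtain y where yS: "\<And>n. y n \<in> S" and yl: "\<And>n. norm (y n) < d + inverse (real (Suc n))"
    by metis
  define c where "c = 2 * d + 1"
  have c0: "c > 0" using d0 by (simp add: c_def)
  have ysq: "(norm (y n))^2 \<le> d^2 + c * inverse (real (Suc n))" for n
  proof -
    let ?e = "inverse (real (Suc n))"
    have e0: "0 < ?e" by auto
    have e1: "?e \<le> 1" by (simp add: inverse_le_1_iff)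
    have "(norm (y n))^2 \<le> (d + ?e)^2"
      using yl[of n] by (intro power_mono) auto
    also have "\<dots> = d^2 + 2*d*?e + ?e * ?e" by (simp add: power2_eq_square algebra_simps)
    also have "\<dots> \<le> d^2 + 2*d*?e + ?e" using e0 e1 by (simp add: mult_le_cancel_left1)
    finally show ?thesis by (simp add: c_def algebra_simps)
  qed
  have mid: "(norm (y m + y n))^2 \<ge> 4 * d^2" for m n
  proof -
    have "(1/2) *\<^sub>R y m + (1/2) *\<^sub>R y n \<in> S"
      using cv yS by (simp add: convex_def)
    hence "d \<le> norm ((1/2) *\<^sub>R (y m + y n))" using dle by (simp add: scaleR_add_right)
    hence "2 * d \<le> norm (y m + y n)" by simp
    hence "(2*d)^2 \<le> (norm (y m + y n))^2" using d0 by (intro power_mono) auto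
    thus ?thesis by (simp add: power2_eq_square)
  qed
  have dist_sq: "(dist (y m) (y n))^2 \<le> 2*c*(inverse (real (Suc m)) + inverse (real (Suc n)))" for m n
    using parallelogram_ineq[of "y m" "y n"] ysq[of m] ysq[of n] mid[of m n]
    by (simp add: dist_norm algebra_simps)
  have "Cauchy y"
  proof (rule metric_CauchyI)
    fix e :: real assume e: "e > 0"
    obtain M where M: "inverse (real (Suc M)) < e^2 / (4*c)"
      using reals_Archimedean[of "e^2/(4*c)"] e c0 by auto
    show "\<exists>M. \<forall>m\<ge>M. \<forall>n\<ge>M. dist (y m) (y n) < e"
    proof (intro exI allI impI)
      fix m n assume mM: "M \<le> m" and nM: "M \<le> n"
      have im: "inverse (real (Suc m)) \<le> inverse (real (Suc M))"
        using mM by (simp add: le_imp_inverse_le)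
      have inn: "inverse (real (Suc n)) \<le> inverse (real (Suc M))"
        using nM by (simp add: le_imp_inverse_le)
      have "(dist (y m) (y n))^2 \<le> 2*c*(2 * inverse (real (Suc M)))"
        using dist_sq[of m n] im inn c0
        by (smt (verit) mult_left_mono)
      also have "\<dots> < 2*c*(2 * (e^2/(4*c)))" using M c0 by (intro mult_strict_left_mono) auto
      also have "\<dots> = e^2" using c0 by simp
      finally have "(dist (y m) (y n))^2 < e^2" .
      thus "dist (y m) (y n) < e" using e by (simp add: power_less_imp_less_base)
    qed
  qed
  then obtain x where lim: "y \<longlonglongrightarrow> x" using Cauchy_convergent_iff convergent_def by blast
  have xS: "x \<in> S" using cl yS lim closed_sequentially by blast
  have "norm x \<le> d"
  proof (rule LIMSEQ_le[OF tendsto_norm[OF lim] LIMSEQ_inverse_real_of_nat_add[of d]])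
    show "\<exists>N. \<forall>n\<ge>N. norm (y n) \<le> d + inverse (real (Suc n))"
      using yl less_imp_le by blast
  qed
  thus ?thesis using xS dle by force
qed

theorem mainTheorem7:
  shows "cc_sponge (hrel :: 'a::{real_inner, complete_space} \<Rightarrow> 'a \<Rightarrow> bool)
         \<and> (\<exists>z::'a. least_element hrel z)"
proof -
  have ori: "orientation (hrel :: 'a \<Rightarrow> 'a \<Rightarrow> bool)"
    unfolding orientation_def hrel_def
  proof (intro conjI allI impI)
    fix x y :: 'a assume h: "inner x x \<le> inner x y \<and> inner y y \<le> inner y x"
    have "inner (x - y) (x - y) \<le> 0" using h
      by (simp add: inner_diff_left inner_diff_right inner_commute)
    hence "inner (x - y) (x - y) = 0" using inner_ge_zero[of "x - y"] by linarith
    thus "x = y" by simp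
  qed simp
  have joins: "\<exists>x. is_join hrel P x" if P: "P \<noteq> {}" "right_bounded hrel P" for P :: "'a set"
  proof -
    define U where "U = (\<Inter>p\<in>P. {y::'a. inner p y \<ge> inner p p})"
    have U: "y \<in> U \<longleftrightarrow> (\<forall>p\<in>P. hrel p y)" for y unfolding U_def hrel_def by auto
    have "closed U" unfolding U_def by (intro closed_INT ballI closed_halfspace_ge)
    moreover have "convex U" unfolding U_def by (intro convex_INT ballI convex_halfspace_ge)
    moreover have "U \<noteq> {}" using P(2) U unfolding right_bounded_def by auto
    ultimately obtain x where xU: "x \<in> U" and xm: "\<forall>y\<in>U. norm x \<le> norm y"
      using min_norm_exists by blast
    have "hrel x y" if "y \<in> U" for y
    proof -
      have "inner (0 - x) (y - x) \<le> 0"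
        using any_closest_point_dot[OF \<open>convex U\<close> \<open>closed U\<close> xU that, of 0] xm by simp
      thus ?thesis unfolding hrel_def by (simp add: inner_diff_right)
    qed
    thus ?thesis unfolding is_join_def using xU U by blast
  qed
  have "least_element hrel (0::'a)" unfolding least_element_def hrel_def by simp
  thus ?thesis using ori joins unfolding cc_sponge_def by blast
qed

end
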